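(* Let $N\ge1$, $1\le q_0\le N$, $g_0:=\gcd(2N+2,q_0)$ and $\kappa_0:=\frac{2N+2}{g_0}$. Let $\overline q_k=(kq_0)\bmod(2N+2)$ if this is $<N+1$ and $\overline q_k=2N+2-(kq_0)\bmod(2N+2)$ otherwise ($k\ge1$). Then the $q_0$-breather sequence of modes $\{\overline q_k\}$ coincides with $\mathrm{Fix}(R^{\kappa_0})\cap\mathrm{Fix}(S)$ regarded as an invariant submanifold of $\mathrm{Fix}(S)$; that is, $\{\overline q_k:k\ge1\}\cap\{1,\dots,N\}=\{j\in\{1,\dots,N\}: j\equiv0 \bmod g_0\}$, the latter being exactly the set of modes $j$ whose coordinates $(Q_j,P_j)$ are not forced to vanish on $\mathrm{Fix}(R^{\kappa_0})\cap\mathrm{Fix}(S)$.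
   Context: Embed the fixed-boundary FPU chain of $N$ particles in the periodic chain of $2N+2$ particles, with Fourier mode coordinates $(Q_j,P_j)$, $j\in\mathbb Z/(2N+2)$. $R$ is the lattice shift symmetry of the periodic chain and $S$ the reflection symmetry $(Q_j,P_j)\mapsto(-Q_{2N+2-j},-P_{2N+2-j})$; for a map $G$, $\mathrm{Fix}(G)$ is its fixed-point set. Then $\mathrm{Fix}(S)=\{Q_j=-Q_{2N+2-j},P_j=-P_{2N+2-j}\}$ is identified with the fixed-boundary chain (modes $j=1,\dots,N$), and for $2N+2=\kappa g$, $\mathrm{Fix}(R^\kappa)=\{Q_j=P_j=0 \text{ whenever } j\not\equiv0\bmod g\}$. *)

theory Defs
  imports Complex_Main
begin

text \<open>Phase space of the periodic chain of 2N+2 particles in Fourier mode coordinates: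
  pairs (Q,P) of functions on mode indices j = 0..2N+1 (indices taken mod 2N+2;
  coordinates outside 0..2N+1 are set to zero).\<close>

definition phase_space :: "nat \<Rightarrow> ((nat \<Rightarrow> real) \<times> (nat \<Rightarrow> real)) set" where
  "phase_space N = {(Q,P). \<forall>j\<ge>2*N+2. Q j = 0 \<and> P j = 0}"

definition FixS :: "nat \<Rightarrow> ((nat \<Rightarrow> real) \<times> (nat \<Rightarrow> real)) set" where
  "FixS N = {(Q,P) \<in> phase_space N. \<forall>j<2*N+2.
       Q j = - Q ((2*N+2 - j) mod (2*N+2)) \<and> P j = - P ((2*N+2 - j) mod (2*N+2))}"

definition FixR_pow :: "nat \<Rightarrow> nat \<Rightarrow> ((nat \<Rightarrow> real) \<times> (nat \<Rightarrow> real)) set" where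
  "FixR_pow N \<kappa> = {(Q,P) \<in> phase_space N. \<forall>j<2*N+2.
       \<not> ((2*N+2) div \<kappa>) dvd j \<longrightarrow> Q j = 0 \<and> P j = 0}"

definition qbar :: "nat \<Rightarrow> nat \<Rightarrow> nat \<Rightarrow> nat" where
  "qbar N q0 k = (let r = (k*q0) mod (2*N+2) in if r < N+1 then r else 2*N+2 - r)"

end

theory Submission
  imports Defs
begin

lemma part1:
  fixes N q0 g0 :: nat
  assumes "N \<ge> 1" and "1 \<le> q0" and "g0 = gcd (2*N+2) q0"
  shows "{qbar N q0 k | k. k \<ge> 1} \<inter> {1..N} = {j \<in> {1..N}. j mod g0 = 0}"
proof (intro equalityI subsetI)
  fix j assume "j \<in> {qbar N q0 k | k. k \<ge> 1} \<inter> {1..N}"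
  then obtain k where j: "j = qbar N q0 k" "j \<in> {1..N}" by blast
  define r where "r = (k*q0) mod (2*N+2)"
  have gM: "g0 dvd 2*N+2" and gq: "g0 dvd q0" using assms by auto
  have "g0 dvd r" unfolding r_def using gM gq by (simp add: dvd_mod)
  moreover have "r \<le> 2*N+2" unfolding r_def using mod_less_divisor[of "2*N+2" "k*q0"] by linarith
  ultimately have "g0 dvd (2*N+2 - r)" using gM by (simp add: dvd_diff_nat)
  hence "g0 dvd j" using j `g0 dvd r` unfolding qbar_def r_def[symmetric] Let_def by auto
  thus "j \<in> {j \<in> {1..N}. j mod g0 = 0}" using j by auto
next
  fix j assume "j \<in> {j \<in> {1..N}. j mod g0 = 0}"
  hence j: "1 \<le> j" "j \<le> N" "g0 dvd j" by auto
  then obtain t where t: "j = g0 * t" by blast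
  obtain x y where xy: "q0 * x = (2*N+2) * y + gcd q0 (2*N+2)"
    using bezout_nat[of q0 "2*N+2"] assms by auto
  have "q0 * (x*t) = (2*N+2) * (y*t) + j"
  proof -
    have "q0 * (x*t) = (q0*x)*t" by (simp add: mult.assoc)
    also have "\<dots> = ((2*N+2) * y + g0) * t" using xy assms by (simp add: gcd.commute)
    also have "\<dots> = (2*N+2) * (y*t) + j" using t by (simp add: algebra_simps)
    finally show ?thesis .
  qed
  hence e: "(x*t) * q0 = j + (2*N+2) * (y*t)" by (simp add: algebra_simps)
  have k1: "x*t \<ge> 1" using e j by (cases "x*t = 0") auto
  have "((x*t) * q0) mod (2*N+2) = (j + (y*t) * (2*N+2)) mod (2*N+2)" using e by (simp add: mult.commute)
  also have "\<dots> = j mod (2*N+2)" by (rule mod_mult_self1)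
  also have "\<dots> = j" using j by simp
  finally have "((x*t) * q0) mod (2*N+2) = j" .
  hence "qbar N q0 (x*t) = j" using j unfolding qbar_def Let_def by simp
  hence "j \<in> {qbar N q0 k | k. k \<ge> 1}" using k1 by blast
  moreover have "j \<in> {1..N}" using j(1,2) by simp
  ultimately show "j \<in> {qbar N q0 k | k. k \<ge> 1} \<inter> {1..N}" by (rule IntI)
qed

theorem proposition4:
  fixes N q0 g0 \<kappa>0 :: nat
  assumes "N \<ge> 1" and "1 \<le> q0" and "q0 \<le> N"
    and "g0 = gcd (2*N+2) q0" and "\<kappa>0 = (2*N+2) div g0"
  shows "{qbar N q0 k | k. k \<ge> 1} \<inter> {1..N} = {j \<in> {1..N}. j mod g0 = 0}
     \<and> {j \<in> {1..N}. j mod g0 = 0} =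
       {j \<in> {1..N}. \<exists>Q P. (Q,P) \<in> FixR_pow N \<kappa>0 \<inter> FixS N \<and> (Q j \<noteq> 0 \<or> P j \<noteq> 0)}"
proof
  show "{qbar N q0 k | k. k \<ge> 1} \<inter> {1..N} = {j \<in> {1..N}. j mod g0 = 0}"
    by (rule part1[OF assms(1,2,4)])
  have gpos: "g0 > 0" using assms by simp
  have gM: "g0 dvd 2*N+2" using assms by simp
  obtain c where c: "2*N+2 = g0 * c" using gM by blast
  have ck: "\<kappa>0 = c" using assms(5) c gpos by simp
  have "c > 0" using c by (cases c) auto
  hence dk: "(2*N+2) div \<kappa>0 = g0" using c ck by simp
  show "{j \<in> {1..N}. j mod g0 = 0} =
       {j \<in> {1..N}. \<exists>Q P. (Q,P) \<in> FixR_pow N \<kappa>0 \<inter> FixS N \<and> (Q j \<noteq> 0 \<or> P j \<noteq> 0)}"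
  proof (intro equalityI subsetI)
    fix j assume "j \<in> {j \<in> {1..N}. j mod g0 = 0}"
    hence j: "1 \<le> j" "j \<le> N" "g0 dvd j" by auto
    define Q :: "nat \<Rightarrow> real" where "Q = (\<lambda>i. if i = j then 1 else if i = 2*N+2-j then -1 else 0)"
    define P :: "nat \<Rightarrow> real" where "P = (\<lambda>i. 0)"
    have d2: "g0 dvd (2*N+2-j)" using gM j by (simp add: dvd_diff_nat)
    have "(Q,P) \<in> FixR_pow N \<kappa>0"
      unfolding FixR_pow_def phase_space_def dk Q_def P_def using j d2 by auto
    moreover have "(Q,P) \<in> FixS N"
    proof -
      have A: "\<forall>i\<ge>2*N+2. Q i = 0 \<and> P i = 0" using j unfolding Q_def P_def by auto
      have B: "Q i = - Q ((2*N+2 - i) mod (2*N+2)) \<and> P i = - P ((2*N+2 - i) mod (2*N+2))"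
        if i: "i < 2*N+2" for i
      proof (cases "i = 0")
        case True thus ?thesis using j unfolding Q_def P_def by auto
      next
        case False
        hence "(2*N+2 - i) mod (2*N+2) = 2*N+2-i" using i by simp
        thus ?thesis using j i False unfolding Q_def P_def by auto
      qed
      show ?thesis unfolding FixS_def phase_space_def using A B by blast
    qed
    moreover have "Q j \<noteq> 0" unfolding Q_def by simp
    ultimately have ex: "\<exists>Q P. (Q,P) \<in> FixR_pow N \<kappa>0 \<inter> FixS N \<and> (Q j \<noteq> 0 \<or> P j \<noteq> 0)"
      by blast
    have jr: "j \<in> {1..N}" using j(1,2) by simp
    show "j \<in> {j \<in> {1..N}. \<exists>Q P. (Q,P) \<in> FixR_pow N \<kappa>0 \<inter> FixS N \<and> (Q j \<noteq> 0 \<or> P j \<noteq> 0)}"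
      using jr ex by simp
  next
    fix j assume "j \<in> {j \<in> {1..N}. \<exists>Q P. (Q,P) \<in> FixR_pow N \<kappa>0 \<inter> FixS N \<and> (Q j \<noteq> 0 \<or> P j \<noteq> 0)}"
    then obtain Q P where j: "1 \<le> j" "j \<le> N" and QP: "(Q,P) \<in> FixR_pow N \<kappa>0" "Q j \<noteq> 0 \<or> P j \<noteq> 0"
      by auto
    have "g0 dvd j"
    proof (rule ccontr)
      assume "\<not> g0 dvd j"
      thus False using QP j unfolding FixR_pow_def dk by auto
    qed
    thus "j \<in> {j \<in> {1..N}. j mod g0 = 0}" using j by auto
  qed
qed

end
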